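(* Let $\rho,\delta>0$, $f\in A_\rho(\mathbb{C}^\ell,\mathbb{C}^d)$, and let $E=A_\delta(\mathbb{C}^m,\mathbb{C}^\ell)$, $F=A_\delta(\mathbb{C}^m,\mathbb{C}^d)$. Let $E(\rho)=\{g\in E:\|g\|_\delta\le\rho\}$. Then the operator $\mathcal{C}_f:E(\rho)\to F$, $\mathcal{C}_f(g)=f\circ g$, is well defined and analytic in the sense that $\mathcal{C}_f\in A_\rho(E,F)$; moreover $\|\mathcal{C}_f\|_{A_\rho(E,F)}\le\|f\|_\rho$.
   Context: Sup norm $\|\eta\|_\infty=\max_i|\eta_i|$ on $\mathbb{C}^s$; $\mathbb{C}^r(\rho)=\{z:\|z\|_\infty\le\rho\}$; multi-index notation $z^\alpha$, $|\alpha|$. For $\rho>0$, $A_\rho(\mathbb{C}^r,\mathbb{C}^s)$ is the Banach space of $f:\mathbb{C}^r(\rho)\to\mathbb{C}^s$, $f(z)=\sum_{k\ge0}\sum_{|\alpha|=k}z^\alpha\eta_\alpha$ with norm $\|f\|_\rho=\sum_{k\ge0}(\sum_{|\alpha|=k}\|\eta_\alpha\|_\infty)\rho^k<\infty$. For Banach spaces $E,F$, $\mathcal{S}_k(E,F)$ denotes bounded symmetric $k$-linear maps $E^k\to F$; here it is normed by $\|b\|=\sup\{\|b(g_1,\ldots,g_k)\|_F:\|g_1\|_E=\cdots=\|g_k\|_E=1\}$. $A_\rho(E,F)$ denotes the space of maps $\Psi$ on the closed ball $E(\rho)$ of the form $\Psi(x)=\sum_{k\ge0}b_k(x,\ldots,x)$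 with $b_k\in\mathcal{S}_k(E,F)$ and $\|\Psi\|_{A_\rho(E,F)}=\sum_k\|b_k\|\rho^k<\infty$. *)

theory Defs
  imports "HOL-Analysis.Analysis" "HOL-Library.Function_Algebras"
begin

text \<open>Vectors of C^s are represented as complex^'s (s = CARD('s)); multi-indices
as functions 'r \<Rightarrow> nat.  An element of A_rho(C^r,C^s) is represented by its
family of coefficients eta_alpha.\<close>

definition supn :: "complex^'n::finite \<Rightarrow> real" where
  "supn x = (MAX i. norm (x $ i))"

definition deg :: "('r::finite \<Rightarrow> nat) \<Rightarrow> nat" where
  "deg \<alpha> = (\<Sum>i\<in>UNIV. \<alpha> i)"

definition zpow :: "complex^'r::finite \<Rightarrow> ('r \<Rightarrow> nat) \<Rightarrow> complex" where
  "zpow z \<alpha> = (\<Prod>i\<in>UNIV. (z $ i) ^ (\<alpha> i))"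

text \<open>membership in A_rho (finite norm) and the norm
  \<open>\<Sum>_k (\<Sum>_{|\<alpha>|=k} |eta_\<alpha>|_inf) rho^k\<close>\<close>
definition inA :: "real \<Rightarrow> (('r::finite \<Rightarrow> nat) \<Rightarrow> complex^'s::finite) \<Rightarrow> bool" where
  "inA \<rho> c \<longleftrightarrow> (\<lambda>\<alpha>. supn (c \<alpha>) * \<rho> ^ deg \<alpha>) summable_on UNIV"

definition Anorm :: "real \<Rightarrow> (('r::finite \<Rightarrow> nat) \<Rightarrow> complex^'s::finite) \<Rightarrow> real" where
  "Anorm \<rho> c = (\<Sum>\<^sub>\<infinity>\<alpha>. supn (c \<alpha>) * \<rho> ^ deg \<alpha>)"

text \<open>the function z \<mapsto> \<Sum>_\<alpha> z^\<alpha> eta_\<alpha> (meaningful on the closed polydisc)\<close>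
definition evalA :: "(('r::finite \<Rightarrow> nat) \<Rightarrow> complex^'s::finite) \<Rightarrow> complex^'r \<Rightarrow> complex^'s" where
  "evalA c z = (\<Sum>\<^sub>\<infinity>\<alpha>. zpow z \<alpha> *s c \<alpha>)"

definition smultA :: "complex \<Rightarrow> (('r \<Rightarrow> nat) \<Rightarrow> complex^'s::finite) \<Rightarrow> (('r \<Rightarrow> nat) \<Rightarrow> complex^'s)" where
  "smultA a c = (\<lambda>\<alpha>. a *s c \<alpha>)"

text \<open>the set whose supremum is the norm of a k-linear map b : E^k \<rightarrow> F, E = A_delta(C^m,C^l),
  F = A_delta(C^m,C^d); arguments of b are lists of length k\<close>
definition mlset :: "real \<Rightarrow> nat \<Rightarrow>
   ((('m::finite \<Rightarrow> nat) \<Rightarrow> complex^'l::finite) list \<Rightarrow> (('m \<Rightarrow> nat) \<Rightarrow> complex^'d::finite)) \<Rightarrow> real set" where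
  "mlset \<delta> k b = {Anorm \<delta> (b gs) | gs. length gs = k \<and> (\<forall>g\<in>set gs. inA \<delta> g \<and> Anorm \<delta> g = 1)}"

definition mlnorm :: "real \<Rightarrow> nat \<Rightarrow>
   ((('m::finite \<Rightarrow> nat) \<Rightarrow> complex^'l::finite) list \<Rightarrow> (('m \<Rightarrow> nat) \<Rightarrow> complex^'d::finite)) \<Rightarrow> real" where
  "mlnorm \<delta> k b = Sup (mlset \<delta> k b)"

definition sym_mlin :: "real \<Rightarrow> nat \<Rightarrow>
   ((('m::finite \<Rightarrow> nat) \<Rightarrow> complex^'l::finite) list \<Rightarrow> (('m \<Rightarrow> nat) \<Rightarrow> complex^'d::finite)) \<Rightarrow> bool" where
  "sym_mlin \<delta> k b \<longleftrightarrow>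
     (\<forall>gs. length gs = k \<and> (\<forall>g\<in>set gs. inA \<delta> g) \<longrightarrow> inA \<delta> (b gs)) \<and>
     (\<forall>gs hs. length gs = k \<and> (\<forall>g\<in>set gs. inA \<delta> g) \<and> mset gs = mset hs \<longrightarrow> b gs = b hs) \<and>
     (\<forall>xs ys u v a. length xs + length ys + 1 = k \<and> (\<forall>g\<in>set (xs @ ys). inA \<delta> g) \<and> inA \<delta> u \<and> inA \<delta> v \<longrightarrow>
         b (xs @ (u + smultA a v) # ys) = b (xs @ u # ys) + smultA a (b (xs @ v # ys))) \<and>
     bdd_above (mlset \<delta> k b)"

end

theory Submission
  imports Defs "HOL-Combinatorics.Permutations"
begin

lemma sum_fun_apply: "(\<Sum>j\<in>A. f j) x = (\<Sum>j\<in>A. f j x)"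
  by (induction A rule: infinite_finite_induct) auto

lemma supn_ge: "norm (x $ i) \<le> supn x"
  unfolding supn_def by (rule Max_ge) auto

lemma supn_le: "(\<And>i. norm (x $ i) \<le> C) \<Longrightarrow> supn x \<le> C"
  unfolding supn_def by (subst Max_le_iff) auto

lemma supn_nonneg: "0 \<le> supn x"
  using supn_ge[of x undefined] norm_ge_zero order_trans by blast

lemma supn_add: "supn (x + y) \<le> supn x + supn y"
  by (rule supn_le) (metis vector_add_component norm_triangle_ineq add_mono supn_ge order_trans)

lemma supn_smult: "supn (a *s x) = norm a * supn x"
proof (rule antisym)
  show "supn (a *s x) \<le> norm a * supn x"
    by (rule supn_le) (simp add: norm_mult mult_left_mono supn_ge)
  have "supn x \<in> range (\<lambda>i. norm (x $ i))"
    unfolding supn_def by (rule Max_in) auto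
  then obtain i where i: "supn x = norm (x $ i)" by auto
  have "norm ((a *s x) $ i) \<le> supn (a *s x)" by (rule supn_ge)
  then show "norm a * supn x \<le> supn (a *s x)" by (simp add: i norm_mult)
qed

lemma supn_zero[simp]: "supn 0 = 0"
  by (simp add: supn_def)

lemma supn_sum: "supn (\<Sum>t\<in>T. f t) \<le> (\<Sum>t\<in>T. supn (f t))"
  by (induction T rule: infinite_finite_induct) (auto intro: order_trans[OF supn_add])

lemma norm_le_supn: "norm (x :: complex^'n::finite) \<le> of_nat CARD('n) * supn x"
proof -
  have "norm x \<le> (\<Sum>i\<in>UNIV. norm (x $ i))" unfolding norm_vec_def by (rule L2_set_le_sum) auto
  also have "\<dots> \<le> (\<Sum>i\<in>(UNIV::'n set). supn x)" by (rule sum_mono) (rule supn_ge)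
  finally show ?thesis by simp
qed

lemma supn_le_norm: "supn (x :: complex^'n::finite) \<le> norm x"
  by (rule supn_le) (rule Finite_Cartesian_Product.norm_nth_le)

lemma zpow_add: "zpow z (\<alpha> + \<beta>) = zpow z \<alpha> * zpow z \<beta>"
  unfolding zpow_def by (simp add: power_add prod.distrib)

lemma zpow_zero[simp]: "zpow z 0 = 1"
  unfolding zpow_def by simp

lemma zpow_sum: "zpow z (\<Sum>j\<in>A. \<gamma> j) = (\<Prod>j\<in>A. zpow z (\<gamma> j))"
proof (induction A rule: infinite_finite_induct)
  case (insert x F)
  have "zpow z (sum \<gamma> (insert x F)) = zpow z (\<gamma> x + sum \<gamma> F)" using insert by (metis sum.insert)
  also have "\<dots> = zpow z (\<gamma> x) * zpow z (sum \<gamma> F)" by (rule zpow_add)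
  finally show ?case using insert by (metis prod.insert sum.insert)
qed (auto simp: zpow_def)

lemma deg_add: "deg (\<alpha> + \<beta>) = deg \<alpha> + deg \<beta>"
  unfolding deg_def by (simp add: sum.distrib)

lemma deg_zero[simp]: "deg 0 = 0"
  unfolding deg_def by simp

lemma deg_sum: "deg (\<Sum>j\<in>A. \<gamma> j) = (\<Sum>j\<in>A. deg (\<gamma> j))"
proof (induction A rule: infinite_finite_induct)
  case (insert x F)
  have "deg (sum \<gamma> (insert x F)) = deg (\<gamma> x + sum \<gamma> F)" using insert by (metis sum.insert)
  also have "\<dots> = deg (\<gamma> x) + deg (sum \<gamma> F)" by (rule deg_add)
  finally show ?case using insert by (metis sum.insert)
qed (auto simp: deg_def)

lemma norm_zpow: "supn z \<le> d \<Longrightarrow> norm (zpow z \<alpha>) \<le> d ^ deg \<alpha>"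
proof -
  assume z: "supn z \<le> d"
  have "norm (zpow z \<alpha>) = (\<Prod>i\<in>UNIV. norm (z $ i) ^ \<alpha> i)"
    unfolding zpow_def by (simp add: prod_norm[symmetric] norm_power)
  also have "\<dots> \<le> (\<Prod>i\<in>UNIV. d ^ \<alpha> i)"
    by (rule prod_mono) (auto intro: power_mono order_trans[OF supn_ge z])
  also have "\<dots> = d ^ deg \<alpha>" unfolding deg_def by (simp add: power_sum)
  finally show ?thesis .
qed


definition Gam :: "nat \<Rightarrow> ('m::finite \<Rightarrow> nat) \<Rightarrow> (nat \<Rightarrow> 'm \<Rightarrow> nat) set" where
  "Gam k \<beta> = {\<gamma> \<in> PiE {..<k} (\<lambda>_. UNIV). (\<Sum>j<k. \<gamma> j) = \<beta>}"

lemma finite_Gam: fixes \<beta> :: "'m::finite \<Rightarrow> nat" shows "finite (Gam k \<beta>)"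
proof -
  have "Gam k \<beta> \<subseteq> PiE {..<k} (\<lambda>_. PiE UNIV (\<lambda>i. {..\<beta> i}))"
  proof
    fix \<gamma> assume g: "\<gamma> \<in> Gam k \<beta>"
    have "\<gamma> j i \<le> \<beta> i" if "j < k" for j i
    proof -
      have "\<beta> i = (\<Sum>j'<k. \<gamma> j' i)" using g by (auto simp: Gam_def sum_fun_apply[symmetric])
      also have "\<dots> \<ge> \<gamma> j i" by (rule member_le_sum) (use that in auto)
      finally show ?thesis .
    qed
    then show "\<gamma> \<in> PiE {..<k} (\<lambda>_. PiE UNIV (\<lambda>i. {..\<beta> i}))"
      using g by (auto simp: Gam_def PiE_def Pi_def extensional_def)
  qed
  moreover have "finite (PiE {..<k} (\<lambda>_. PiE (UNIV::'m set) (\<lambda>i. {..\<beta> i})))"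
    by (intro finite_PiE) auto
  ultimately show ?thesis by (rule finite_subset)
qed

lemma PiE_summable_nonneg:
  fixes a :: "'i \<Rightarrow> 'b \<Rightarrow> real"
  assumes A: "finite A" and nn: "\<And>j x. 0 \<le> a j x" and s: "\<And>j. j\<in>A \<Longrightarrow> a j summable_on UNIV"
  shows "(\<lambda>p. \<Prod>j\<in>A. a j (p j)) summable_on PiE A (\<lambda>_. UNIV)"
proof (rule nonneg_bdd_above_summable_on)
  show "0 \<le> (\<Prod>j\<in>A. a j (p j))" for p by (rule prod_nonneg) (use nn in auto)
  show "bdd_above (sum (\<lambda>p. \<Prod>j\<in>A. a j (p j)) ` {F. F \<subseteq> PiE A (\<lambda>_. UNIV) \<and> finite F})"
  proof (rule bdd_aboveI2)
    fix F :: "('i \<Rightarrow> 'b) set" assume F: "F \<in> {F. F \<subseteq> PiE A (\<lambda>_. UNIV) \<and> finite F}"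
    define B where "B j = (\<lambda>p. p j) ` F" for j
    have fB: "finite (B j)" for j using F by (auto simp: B_def)
    have sub: "F \<subseteq> PiE A B" using F by (auto simp: B_def PiE_def Pi_def)
    have "(\<Sum>p\<in>F. \<Prod>j\<in>A. a j (p j)) \<le> (\<Sum>p\<in>PiE A B. \<Prod>j\<in>A. a j (p j))"
      by (rule sum_mono2) (use sub fB A in \<open>auto intro!: finite_PiE prod_nonneg nn\<close>)
    also have "\<dots> = (\<Prod>j\<in>A. \<Sum>y\<in>B j. a j y)"
      by (rule prod_sum_PiE[symmetric]) (use A fB in auto)
    also have "\<dots> \<le> (\<Prod>j\<in>A. \<Sum>\<^sub>\<infinity>y. a j y)"
      by (rule prod_mono) (use fB s nn in \<open>auto intro!: sum_nonneg finite_sum_le_infsum\<close>)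
    finally show "(\<Sum>p\<in>F. \<Prod>j\<in>A. a j (p j)) \<le> (\<Prod>j\<in>A. \<Sum>\<^sub>\<infinity>y. a j y)" .
  qed
qed

lemma conv_has_sum:
  fixes a :: "nat \<Rightarrow> ('m::finite \<Rightarrow> nat) \<Rightarrow> 'c::{banach, real_normed_field, uniform_topological_group_add}"
  assumes s: "\<And>j. j<k \<Longrightarrow> (\<lambda>\<gamma>. norm (a j \<gamma>)) summable_on UNIV"
  shows "((\<lambda>\<beta>. \<Sum>\<gamma>\<in>Gam k \<beta>. \<Prod>j<k. a j (\<gamma> j)) has_sum (\<Prod>j<k. \<Sum>\<^sub>\<infinity>\<gamma>. a j \<gamma>)) UNIV"
proof -
  let ?P = "PiE {..<k} (\<lambda>_. UNIV :: ('m\<Rightarrow>nat) set)"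
  have abs: "(\<lambda>p. norm (\<Prod>j<k. a j (p j))) summable_on ?P"
    using PiE_summable_nonneg[of "{..<k}" "\<lambda>j x. norm (a j x)"] s by (simp add: prod_norm)
  hence summ: "(\<lambda>p. \<Prod>j<k. a j (p j)) summable_on ?P" by (rule abs_summable_summable)
  have val: "(\<Sum>\<^sub>\<infinity>p\<in>?P. \<Prod>j<k. a j (p j)) = (\<Prod>j<k. \<Sum>\<^sub>\<infinity>\<gamma>. a j \<gamma>)"
    by (rule infsum_prod_PiE_abs) (use s in auto)
  have hs: "((\<lambda>p. \<Prod>j<k. a j (p j)) has_sum (\<Prod>j<k. \<Sum>\<^sub>\<infinity>\<gamma>. a j \<gamma>)) ?P"
    using has_sum_infsum[OF summ] unfolding val .
  define g where "g p = ((\<Sum>j<k. p j), p)" for p :: "nat \<Rightarrow> 'm \<Rightarrow> nat"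
  have bij: "bij_betw g ?P (Sigma UNIV (Gam k))"
    by (rule bij_betwI[where g = snd]) (auto simp: g_def Gam_def)
  have "((\<lambda>(\<beta>,\<gamma>). \<Prod>j<k. a j (\<gamma> j)) has_sum (\<Prod>j<k. \<Sum>\<^sub>\<infinity>\<gamma>. a j \<gamma>)) (Sigma UNIV (Gam k))"
    using has_sum_reindex_bij_betw[OF bij, of "\<lambda>(\<beta>,\<gamma>). \<Prod>j<k. a j (\<gamma> j)"] hs by (simp add: g_def)
  then show ?thesis
  proof (rule has_sum_Sigma')
    fix x :: "'m \<Rightarrow> nat"
    show "((\<lambda>y. (\<lambda>(\<beta>,\<gamma>). \<Prod>j<k. a j (\<gamma> j)) (x,y)) has_sum (\<Sum>\<gamma>\<in>Gam k x. \<Prod>j<k. a j (\<gamma> j))) (Gam k x)"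
      using has_sum_finite[OF finite_Gam, of "\<lambda>\<gamma>. \<Prod>j<k. a j (\<gamma> j)" k x] by simp
  qed
qed

definition cprod :: "nat \<Rightarrow> (nat \<Rightarrow> ('m::finite \<Rightarrow> nat) \<Rightarrow> complex) \<Rightarrow> ('m \<Rightarrow> nat) \<Rightarrow> complex" where
  "cprod k p \<beta> = (\<Sum>\<gamma>\<in>Gam k \<beta>. \<Prod>j<k. p j (\<gamma> j))"

definition cnorm :: "real \<Rightarrow> (('m::finite \<Rightarrow> nat) \<Rightarrow> complex) \<Rightarrow> real" where
  "cnorm d p = (\<Sum>\<^sub>\<infinity>\<beta>. norm (p \<beta>) * d ^ deg \<beta>)"

definition cinA :: "real \<Rightarrow> (('m::finite \<Rightarrow> nat) \<Rightarrow> complex) \<Rightarrow> bool" where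
  "cinA d p \<longleftrightarrow> (\<lambda>\<beta>. norm (p \<beta>) * d ^ deg \<beta>) summable_on UNIV"

lemma cprod_eval:
  assumes s: "\<And>j. j<k \<Longrightarrow> (\<lambda>\<gamma>. norm (zpow z \<gamma> * p j \<gamma>)) summable_on UNIV"
  shows "((\<lambda>\<beta>. zpow z \<beta> * cprod k p \<beta>) has_sum (\<Prod>j<k. \<Sum>\<^sub>\<infinity>\<gamma>. zpow z \<gamma> * p j \<gamma>)) UNIV"
proof -
  have "((\<lambda>\<beta>. \<Sum>\<gamma>\<in>Gam k \<beta>. \<Prod>j<k. zpow z (\<gamma> j) * p j (\<gamma> j)) has_sum (\<Prod>j<k. \<Sum>\<^sub>\<infinity>\<gamma>. zpow z \<gamma> * p j \<gamma>)) UNIV"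
    by (rule conv_has_sum) (use s in auto)
  moreover have "(\<Sum>\<gamma>\<in>Gam k \<beta>. \<Prod>j<k. zpow z (\<gamma> j) * p j (\<gamma> j)) = zpow z \<beta> * cprod k p \<beta>" for \<beta>
    unfolding cprod_def sum_distrib_left
    by (rule sum.cong) (auto simp: Gam_def prod.distrib zpow_sum[symmetric])
  ultimately show ?thesis by simp
qed

lemma cprod_norm:
  assumes d: "0 \<le> d" and s: "\<And>j. j<k \<Longrightarrow> cinA d (p j)"
  shows "cinA d (cprod k p)" "cnorm d (cprod k p) \<le> (\<Prod>j<k. cnorm d (p j))"
proof -
  have hs: "((\<lambda>\<beta>. \<Sum>\<gamma>\<in>Gam k \<beta>. \<Prod>j<k. norm (p j (\<gamma> j)) * d ^ deg (\<gamma> j)) has_sum (\<Prod>j<k. cnorm d (p j))) UNIV"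
    unfolding cnorm_def by (rule conv_has_sum) (use s d in \<open>auto simp: cinA_def\<close>)
  have eq: "(\<Sum>\<gamma>\<in>Gam k \<beta>. \<Prod>j<k. norm (p j (\<gamma> j)) * d ^ deg (\<gamma> j))
      = (\<Sum>\<gamma>\<in>Gam k \<beta>. \<Prod>j<k. norm (p j (\<gamma> j))) * d ^ deg \<beta>" for \<beta>
    unfolding sum_distrib_right
    by (rule sum.cong) (auto simp: Gam_def prod.distrib deg_sum power_sum)
  have le: "norm (cprod k p \<beta>) * d ^ deg \<beta> \<le> (\<Sum>\<gamma>\<in>Gam k \<beta>. \<Prod>j<k. norm (p j (\<gamma> j)) * d ^ deg (\<gamma> j))" for \<beta>
    unfolding eq cprod_def
    by (rule mult_right_mono) (auto simp: d prod_norm intro: order_trans[OF norm_sum])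
  show c: "cinA d (cprod k p)" unfolding cinA_def
    by (rule summable_on_comparison_test[OF has_sum_imp_summable[OF hs] le]) (simp add: d)
  show "cnorm d (cprod k p) \<le> (\<Prod>j<k. cnorm d (p j))"
    unfolding cnorm_def[of d "cprod k p"] by (rule has_sum_mono[OF has_sum_infsum[OF c[unfolded cinA_def]] hs le])
qed


lemma has_sum_vec:
  fixes f :: "'a \<Rightarrow> 'b::real_normed_vector^'n::finite"
  shows "(f has_sum S) A \<longleftrightarrow> (\<forall>i. ((\<lambda>x. f x $ i) has_sum S $ i) A)"
proof
  assume "(f has_sum S) A"
  then show "\<forall>i. ((\<lambda>x. f x $ i) has_sum S $ i) A"
    using has_sum_bounded_linear[OF bounded_linear_vec_nth] by blast
next
  assume a: "\<forall>i. ((\<lambda>x. f x $ i) has_sum S $ i) A"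
  show "(f has_sum S) A" unfolding has_sum_def
    by (rule vec_tendstoI) (use a in \<open>simp add: has_sum_def sum_component\<close>)
qed

lemma has_sum_sum':
  fixes f :: "'i \<Rightarrow> 'a \<Rightarrow> 'b::topological_comm_monoid_add"
  assumes "finite I" "\<And>i. i \<in> I \<Longrightarrow> (f i has_sum s i) A"
  shows "((\<lambda>x. \<Sum>i\<in>I. f i x) has_sum (\<Sum>i\<in>I. s i)) A"
  using assms by (induction I rule: finite_induct) (auto intro: has_sum_add)

lemma has_sum_diff':
  fixes f :: "'a \<Rightarrow> 'b::topological_ab_group_add"
  assumes "(f has_sum a) A" "(g has_sum b) A"
  shows "((\<lambda>x. f x - g x) has_sum (a - b)) A"
proof -
  have "((\<lambda>x. - g x) has_sum - b) A" using assms(2) by (simp add: has_sum_uminus)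
  from has_sum_add[OF assms(1) this] show ?thesis by simp
qed

lemma supn_scaleR: "supn (r *\<^sub>R x) = \<bar>r\<bar> * supn (x :: complex^'n::finite)"
proof -
  have "r *\<^sub>R x = complex_of_real r *s x" by (simp add: vec_eq_iff) (simp add: scaleR_conv_of_real)
  then show ?thesis by (simp add: supn_smult)
qed

definition cmp :: "(('m::finite \<Rightarrow> nat) \<Rightarrow> complex^'l::finite) \<Rightarrow> 'l \<Rightarrow> ('m \<Rightarrow> nat) \<Rightarrow> complex" where
  "cmp g i = (\<lambda>\<beta>. g \<beta> $ i)"

lemma inA_summable: "inA d g \<Longrightarrow> ((\<lambda>\<beta>. supn (g \<beta>) * d ^ deg \<beta>) has_sum Anorm d g) UNIV"
  unfolding inA_def Anorm_def by (rule has_sum_infsum)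

lemma Anorm_nonneg: "0 \<le> d \<Longrightarrow> 0 \<le> Anorm d g"
  unfolding Anorm_def by (rule infsum_nonneg) (simp add: supn_nonneg)

lemma comp_cinA:
  assumes "inA d g" "0 \<le> d" shows "cinA d (cmp g i)" "cnorm d (cmp g i) \<le> Anorm d g"
proof -
  have le: "norm (cmp g i \<beta>) * d ^ deg \<beta> \<le> supn (g \<beta>) * d ^ deg \<beta>" for \<beta>
    using assms(2) by (auto simp: cmp_def intro: mult_right_mono supn_ge)
  show c: "cinA d (cmp g i)" unfolding cinA_def
    by (rule summable_on_comparison_test[OF assms(1)[unfolded inA_def] le]) (simp add: assms)
  show "cnorm d (cmp g i) \<le> Anorm d g"
    unfolding cnorm_def Anorm_def
    by (rule infsum_mono[OF c[unfolded cinA_def] assms(1)[unfolded inA_def] le])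
qed

lemma evalA_has_sum:
  fixes c :: "('m::finite \<Rightarrow> nat) \<Rightarrow> complex^'s::finite"
  assumes c: "inA d c" and z: "supn z \<le> d"
  shows "((\<lambda>\<alpha>. zpow z \<alpha> *s c \<alpha>) has_sum evalA c z) UNIV"
proof -
  have d: "0 \<le> d" using supn_nonneg z order_trans by blast
  have le: "norm (zpow z \<alpha> *s c \<alpha>) \<le> of_nat CARD('s) * (supn (c \<alpha>) * d ^ deg \<alpha>)" for \<alpha>
  proof -
    have "norm (zpow z \<alpha> *s c \<alpha>) \<le> of_nat CARD('s) * supn (zpow z \<alpha> *s c \<alpha>)" by (rule norm_le_supn)
    also have "\<dots> = of_nat CARD('s) * (norm (zpow z \<alpha>) * supn (c \<alpha>))" by (simp add: supn_smult)
    also have "\<dots> \<le> of_nat CARD('s) * (supn (c \<alpha>) * d ^ deg \<alpha>)"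
      using norm_zpow[OF z, of \<alpha>] supn_nonneg[of "c \<alpha>"]
      by (intro mult_left_mono) (auto simp: mult.commute intro: mult_left_mono)
    finally show ?thesis .
  qed
  have "(\<lambda>\<alpha>. of_nat CARD('s) * (supn (c \<alpha>) * d ^ deg \<alpha>)) summable_on UNIV"
    using c unfolding inA_def by (rule summable_on_cmult_right)
  then have "(\<lambda>\<alpha>. norm (zpow z \<alpha> *s c \<alpha>)) summable_on UNIV"
    by (rule summable_on_comparison_test) (use le in auto)
  then have "(\<lambda>\<alpha>. zpow z \<alpha> *s c \<alpha>) summable_on UNIV" by (rule abs_summable_summable)
  then show ?thesis unfolding evalA_def by (rule has_sum_infsum)
qed

lemma evalA_comp:
  assumes "inA d c" and "supn z \<le> d"
  shows "((\<lambda>\<alpha>. zpow z \<alpha> * cmp c i \<alpha>) has_sum evalA c z $ i) UNIV"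
  using evalA_has_sum[OF assms] unfolding has_sum_vec by (simp add: cmp_def)

lemma supn_evalA:
  assumes c: "inA d c" and z: "supn z \<le> d"
  shows "supn (evalA c z) \<le> Anorm d c"
proof (rule supn_le)
  fix i
  show "norm (evalA c z $ i) \<le> Anorm d c"
  proof (rule norm_infsum_le[OF evalA_comp[OF c z] inA_summable[OF c]])
    fix \<alpha>
    have "norm (zpow z \<alpha> * cmp c i \<alpha>) = norm (zpow z \<alpha>) * norm (c \<alpha> $ i)" by (simp add: cmp_def norm_mult)
    also have "\<dots> \<le> d ^ deg \<alpha> * supn (c \<alpha>)"
      using supn_nonneg[of z] z by (intro mult_mono) (auto simp: norm_zpow[OF z] supn_ge)
    finally show "norm (zpow z \<alpha> * cmp c i \<alpha>) \<le> supn (c \<alpha>) * d ^ deg \<alpha>" by (simp add: mult.commute)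
  qed
qed

lemma cinA_eval_summable:
  assumes p: "cinA d p" and z: "supn z \<le> d"
  shows "(\<lambda>\<gamma>. norm (zpow z \<gamma> * p \<gamma>)) summable_on UNIV"
proof (rule summable_on_comparison_test[OF p[unfolded cinA_def]])
  fix \<gamma>
  show "norm (zpow z \<gamma> * p \<gamma>) \<le> norm (p \<gamma>) * d ^ deg \<gamma>"
    by (simp add: norm_mult mult.commute mult_left_mono norm_zpow[OF z])
qed simp


definition Tset :: "nat \<Rightarrow> (nat \<Rightarrow> 'l::finite) set" where
  "Tset k = PiE {..<k} (\<lambda>_. UNIV)"

definition cnt :: "nat \<Rightarrow> (nat \<Rightarrow> 'l::finite) \<Rightarrow> 'l \<Rightarrow> nat" where
  "cnt k t = (\<lambda>i. card {j\<in>{..<k}. t j = i})"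

definition fib :: "nat \<Rightarrow> ('l::finite \<Rightarrow> nat) \<Rightarrow> (nat \<Rightarrow> 'l) set" where
  "fib k \<alpha> = {t\<in>Tset k. cnt k t = \<alpha>}"

definition Dg :: "nat \<Rightarrow> ('l::finite \<Rightarrow> nat) set" where
  "Dg k = {\<alpha>. deg \<alpha> = k}"

lemma finite_Tset: "finite (Tset k)"
  unfolding Tset_def by (intro finite_PiE) auto

lemma finite_fib: "finite (fib k \<alpha>)"
  unfolding fib_def by (rule finite_subset[OF _ finite_Tset]) auto

lemma finite_Dg: "finite (Dg k :: ('l::finite \<Rightarrow> nat) set)"
proof -
  have "Dg k \<subseteq> PiE (UNIV::'l set) (\<lambda>_. {..k})"
  proof
    fix \<alpha> :: "'l \<Rightarrow> nat" assume "\<alpha> \<in> Dg k"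
    then have "\<alpha> i \<le> k" for i unfolding Dg_def deg_def
      using member_le_sum[of i UNIV \<alpha>] by auto
    then show "\<alpha> \<in> PiE UNIV (\<lambda>_. {..k})" by auto
  qed
  moreover have "finite (PiE (UNIV::'l set) (\<lambda>_. {..k}))" by (intro finite_PiE) auto
  ultimately show ?thesis by (rule finite_subset)
qed

lemma deg_cnt: "deg (cnt k t) = k"
proof -
  have "deg (cnt k t) = (\<Sum>i\<in>UNIV. card {j. j \<in> {..<k} \<and> t j = i})"
    unfolding deg_def cnt_def by simp
  also have "\<dots> = (\<Sum>i\<in>UNIV. \<Sum>j\<in>{j. j \<in> {..<k} \<and> t j = i}. 1)" by simp
  also have "\<dots> = (\<Sum>j\<in>{..<k}. (1::nat))"
    by (rule sum.group) auto
  finally show ?thesis by simp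
qed

lemma cnt_image: "cnt k ` Tset k = (Dg k :: ('l::finite \<Rightarrow> nat) set)"
proof
  show "cnt k ` Tset k \<subseteq> Dg k" by (auto simp: Dg_def deg_cnt)
  show "Dg k \<subseteq> cnt k ` (Tset k :: (nat \<Rightarrow> 'l) set)"
  proof
    fix \<alpha> :: "'l \<Rightarrow> nat" assume a: "\<alpha> \<in> Dg k"
    define M where "M = (\<Sum>i\<in>UNIV. replicate_mset (\<alpha> i) i)"
    obtain xs where xs: "mset xs = M" using ex_mset by blast
    have cM: "count_list xs i = \<alpha> i" for i
      using xs by (simp add: count_mset[symmetric] M_def count_sum)
    have len: "length xs = k"
    proof -
      have "length xs = (\<Sum>i\<in>UNIV. count_list xs i)" by (rule sum_count_set[symmetric]) auto
      also have "\<dots> = k" using a by (simp add: cM Dg_def deg_def)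
      finally show ?thesis .
    qed
    define t where "t = restrict (\<lambda>j. xs ! j) {..<k}"
    have "t \<in> Tset k" by (simp add: t_def Tset_def)
    moreover have "cnt k t = \<alpha>"
    proof (rule ext)
      fix i
      have "{j\<in>{..<k}. t j = i} = {j. j < length xs \<and> i = xs ! j}" using len by (auto simp: t_def)
      then show "cnt k t i = \<alpha> i"
        by (simp add: cnt_def cM[symmetric] count_list_eq_length_filter length_filter_conv_card)
    qed
    ultimately show "\<alpha> \<in> cnt k ` Tset k" by (metis image_eqI)
  qed
qed

lemma fib_card_pos:
  assumes "\<alpha> \<in> Dg k" shows "card (fib k \<alpha>) > 0"
proof -
  from assms obtain t where t: "t \<in> Tset k" "cnt k t = \<alpha>" unfolding cnt_image[symmetric] by auto
  then have "t \<in> fib k \<alpha>" by (simp add: fib_def)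
  then show ?thesis using finite_fib[of k \<alpha>] card_gt_0_iff by blast
qed

lemma fiber_sum:
  fixes H :: "('l::finite \<Rightarrow> nat) \<Rightarrow> 'v::real_vector"
  shows "(\<Sum>t\<in>Tset k. (1 / real (card (fib k (cnt k t)))) *\<^sub>R H (cnt k t)) = (\<Sum>\<alpha>\<in>Dg k. H \<alpha>)"
proof -
  have "(\<Sum>t\<in>Tset k. (1 / real (card (fib k (cnt k t)))) *\<^sub>R H (cnt k t))
      = (\<Sum>\<alpha>\<in>Dg k. \<Sum>t\<in>{t. t \<in> Tset k \<and> cnt k t = \<alpha>}. (1 / real (card (fib k (cnt k t)))) *\<^sub>R H (cnt k t))"
    by (rule sum.group[symmetric]) (auto simp: finite_Tset finite_Dg cnt_image)
  also have "\<dots> = (\<Sum>\<alpha>\<in>Dg k. \<Sum>t\<in>fib k \<alpha>. (1 / real (card (fib k \<alpha>))) *\<^sub>R H \<alpha>)"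
    by (rule sum.cong) (auto simp: fib_def)
  also have "\<dots> = (\<Sum>\<alpha>\<in>Dg k. H \<alpha>)"
  proof (rule sum.cong)
    fix \<alpha> :: "'l \<Rightarrow> nat" assume "\<alpha> \<in> Dg k"
    then have "card (fib k \<alpha>) > 0" by (rule fib_card_pos)
    then show "(\<Sum>t\<in>fib k \<alpha>. (1 / real (card (fib k \<alpha>))) *\<^sub>R H \<alpha>) = H \<alpha>"
      by (simp add: sum_constant_scaleR)
  qed simp
  finally show ?thesis .
qed


definition cf :: "(('l::finite \<Rightarrow> nat) \<Rightarrow> complex^'d::finite) \<Rightarrow> nat \<Rightarrow> (nat \<Rightarrow> 'l) \<Rightarrow> complex^'d" where
  "cf f k t = (1 / real (card (fib k (cnt k t)))) *\<^sub>R f (cnt k t)"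

definition Bop :: "(('l::finite \<Rightarrow> nat) \<Rightarrow> complex^'d::finite) \<Rightarrow> nat
    \<Rightarrow> (('m::finite \<Rightarrow> nat) \<Rightarrow> complex^'l) list \<Rightarrow> ('m \<Rightarrow> nat) \<Rightarrow> complex^'d" where
  "Bop f k gs = (\<lambda>\<beta>. \<Sum>t\<in>Tset k. cprod k (\<lambda>j. cmp (gs ! j) (t j)) \<beta> *s cf f k t)"

definition Mk :: "(('l::finite \<Rightarrow> nat) \<Rightarrow> complex^'d::finite) \<Rightarrow> nat \<Rightarrow> real" where
  "Mk f k = (\<Sum>\<alpha>\<in>Dg k. supn (f \<alpha>))"

lemma sum_supn_cf: "(\<Sum>t\<in>Tset k. supn (cf f k t)) = Mk f k"
proof -
  have "(\<Sum>t\<in>Tset k. supn (cf f k t)) = (\<Sum>t\<in>Tset k. (1 / real (card (fib k (cnt k t)))) *\<^sub>R supn (f (cnt k t)))"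
    by (simp add: cf_def supn_scaleR)
  also have "\<dots> = Mk f k" unfolding Mk_def by (rule fiber_sum)
  finally show ?thesis .
qed

lemma Mk_nonneg: "0 \<le> Mk f k"
  unfolding Mk_def by (rule sum_nonneg) (simp add: supn_nonneg)

lemma cnorm_nonneg: "0 \<le> d \<Longrightarrow> 0 \<le> cnorm d p"
  unfolding cnorm_def by (rule infsum_nonneg) simp

lemma Bop_bound:
  assumes d: "0 \<le> d" and gs: "\<And>g. g \<in> set gs \<Longrightarrow> inA d g" and len: "length gs = k"
  shows "inA d (Bop f k gs)"
    "Anorm d (Bop f k gs) \<le> (\<Sum>t\<in>Tset k. supn (cf f k t)) * (\<Prod>j<k. Anorm d (gs ! j))"
proof -
  define q where "q t = cprod k (\<lambda>j. cmp (gs ! j) (t j))" for t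
  have gj: "inA d (gs ! j)" if "j < k" for j using gs len that by auto
  have qc: "cinA d (q t)" and qn: "cnorm d (q t) \<le> (\<Prod>j<k. Anorm d (gs ! j))" for t
  proof -
    show "cinA d (q t)" unfolding q_def by (rule cprod_norm(1)) (use d gj comp_cinA in auto)
    have "cnorm d (q t) \<le> (\<Prod>j<k. cnorm d (cmp (gs ! j) (t j)))"
      unfolding q_def by (rule cprod_norm(2)) (use d gj comp_cinA in auto)
    also have "\<dots> \<le> (\<Prod>j<k. Anorm d (gs ! j))"
    proof (rule prod_mono)
      fix j assume "j \<in> {..<k}" then have j: "j < k" by simp
      show "0 \<le> cnorm d (cmp (gs ! j) (t j)) \<and> cnorm d (cmp (gs ! j) (t j)) \<le> Anorm d (gs ! j)"
        using comp_cinA(2)[OF gj[OF j] d] cnorm_nonneg[OF d] by auto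
    qed
    finally show "cnorm d (q t) \<le> (\<Prod>j<k. Anorm d (gs ! j))" .
  qed
  have le: "supn (Bop f k gs \<beta>) * d ^ deg \<beta> \<le> (\<Sum>t\<in>Tset k. supn (cf f k t) * (norm (q t \<beta>) * d ^ deg \<beta>))" for \<beta>
  proof -
    have "supn (Bop f k gs \<beta>) \<le> (\<Sum>t\<in>Tset k. supn (q t \<beta> *s cf f k t))"
      unfolding Bop_def q_def by (rule supn_sum)
    then have "supn (Bop f k gs \<beta>) * d ^ deg \<beta> \<le> (\<Sum>t\<in>Tset k. supn (q t \<beta> *s cf f k t)) * d ^ deg \<beta>"
      by (rule mult_right_mono) (simp add: d)
    then show ?thesis by (simp add: supn_smult sum_distrib_right sum_distrib_left mult_ac)
  qed
  have hs: "((\<lambda>\<beta>. \<Sum>t\<in>Tset k. supn (cf f k t) * (norm (q t \<beta>) * d ^ deg \<beta>))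
      has_sum (\<Sum>t\<in>Tset k. supn (cf f k t) * cnorm d (q t))) UNIV"
    by (rule has_sum_sum') (use qc in \<open>auto simp: finite_Tset cinA_def cnorm_def intro!: has_sum_cmult_right\<close>)
  show c: "inA d (Bop f k gs)" unfolding inA_def
    by (rule summable_on_comparison_test[OF has_sum_imp_summable[OF hs] le]) (simp add: d supn_nonneg)
  have "Anorm d (Bop f k gs) \<le> (\<Sum>t\<in>Tset k. supn (cf f k t) * cnorm d (q t))"
    unfolding Anorm_def by (rule has_sum_mono[OF has_sum_infsum[OF c[unfolded inA_def]] hs le])
  also have "\<dots> \<le> (\<Sum>t\<in>Tset k. supn (cf f k t) * (\<Prod>j<k. Anorm d (gs ! j)))"
    by (rule sum_mono) (rule mult_left_mono[OF qn supn_nonneg])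
  finally show "Anorm d (Bop f k gs) \<le> (\<Sum>t\<in>Tset k. supn (cf f k t)) * (\<Prod>j<k. Anorm d (gs ! j))"
    by (simp add: sum_distrib_right)
qed

lemma Bop_eval:
  assumes z: "supn z \<le> d" and gs: "\<And>g. g \<in> set gs \<Longrightarrow> inA d g" and len: "length gs = k"
  shows "((\<lambda>\<beta>. zpow z \<beta> *s Bop f k gs \<beta>) has_sum
           (\<Sum>t\<in>Tset k. (\<Prod>j<k. evalA (gs ! j) z $ t j) *s cf f k t)) UNIV"
proof -
  have d: "0 \<le> d" using supn_nonneg[of z] z by linarith
  have gj: "inA d (gs ! j)" if "j < k" for j using gs len that by auto
  have ev: "((\<lambda>\<beta>. zpow z \<beta> * cprod k (\<lambda>j. cmp (gs ! j) (t j)) \<beta>) has_sum (\<Prod>j<k. evalA (gs ! j) z $ t j)) UNIV" for t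
  proof -
    have "((\<lambda>\<beta>. zpow z \<beta> * cprod k (\<lambda>j. cmp (gs ! j) (t j)) \<beta>) has_sum
        (\<Prod>j<k. \<Sum>\<^sub>\<infinity>\<gamma>. zpow z \<gamma> * cmp (gs ! j) (t j) \<gamma>)) UNIV"
      by (rule cprod_eval) (use gj comp_cinA d cinA_eval_summable z in blast)
    moreover have "(\<Sum>\<^sub>\<infinity>\<gamma>. zpow z \<gamma> * cmp (gs ! j) (t j) \<gamma>) = evalA (gs ! j) z $ t j" if "j < k" for j
      by (rule infsumI[OF evalA_comp[OF gj[OF that] z]])
    ultimately show ?thesis by simp
  qed
  show ?thesis unfolding has_sum_vec
  proof
    fix i
    have "((\<lambda>\<beta>. \<Sum>t\<in>Tset k. (zpow z \<beta> * cprod k (\<lambda>j. cmp (gs ! j) (t j)) \<beta>) * cf f k t $ i) has_sum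
        (\<Sum>t\<in>Tset k. (\<Prod>j<k. evalA (gs ! j) z $ t j) * cf f k t $ i)) UNIV"
      by (rule has_sum_sum') (auto simp: finite_Tset intro!: has_sum_cmult_left ev)
    then show "((\<lambda>\<beta>. (zpow z \<beta> *s Bop f k gs \<beta>) $ i) has_sum
        (\<Sum>t\<in>Tset k. (\<Prod>j<k. evalA (gs ! j) z $ t j) *s cf f k t) $ i) UNIV"
      by (simp add: Bop_def sum_distrib_left mult_ac)
  qed
qed

lemma prod_cnt: "t \<in> Tset k \<Longrightarrow> (\<Prod>j<k. w $ t j) = zpow w (cnt k t)"
proof -
  have "(\<Prod>j<k. w $ t j) = (\<Prod>i\<in>UNIV. \<Prod>j\<in>{j. j \<in> {..<k} \<and> t j = i}. w $ t j)"
    by (rule prod.group[symmetric]) auto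
  also have "\<dots> = (\<Prod>i\<in>UNIV. w $ i ^ cnt k t i)"
    by (rule prod.cong) (auto simp: cnt_def)
  finally show ?thesis by (simp add: zpow_def)
qed

lemma Bop_rep_value:
  fixes g :: "('m::finite \<Rightarrow> nat) \<Rightarrow> complex^'l::finite" and f :: "('l \<Rightarrow> nat) \<Rightarrow> complex^'d::finite"
  shows "(\<Sum>t\<in>Tset k. (\<Prod>j<k. evalA (replicate k g ! j) z $ t j) *s cf f k t)
    = (\<Sum>\<alpha>\<in>Dg k. zpow (evalA g z) \<alpha> *s f \<alpha>)"
proof -
  have "(\<Sum>t\<in>Tset k. (\<Prod>j<k. evalA (replicate k g ! j) z $ t j) *s cf f k t)
     = (\<Sum>t\<in>Tset k. (1 / real (card (fib k (cnt k t)))) *\<^sub>R (zpow (evalA g z) (cnt k t) *s f (cnt k t)))"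
  proof (rule sum.cong)
    fix t :: "nat \<Rightarrow> 'l" assume t: "t \<in> Tset k"
    have "(\<Prod>j<k. evalA (replicate k g ! j) z $ t j) = (\<Prod>j<k. evalA g z $ t j)" by simp
    also have "\<dots> = zpow (evalA g z) (cnt k t)" by (rule prod_cnt[OF t])
    finally show "(\<Prod>j<k. evalA (replicate k g ! j) z $ t j) *s cf f k t =
        (1 / real (card (fib k (cnt k t)))) *\<^sub>R (zpow (evalA g z) (cnt k t) *s f (cnt k t))"
      by (simp add: cf_def vec_eq_iff scaleR_conv_of_real)
  qed simp
  also have "\<dots> = (\<Sum>\<alpha>\<in>Dg k. zpow (evalA g z) \<alpha> *s f \<alpha>)" by (rule fiber_sum)
  finally show ?thesis .
qed


lemma perm_restrict_inv:
  assumes p: "p permutes {..<k}" and x: "x \<in> PiE {..<k} (\<lambda>_. UNIV)"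
  shows "restrict (restrict (x \<circ> p) {..<k} \<circ> inv p) {..<k} = x"
    and "restrict (restrict (x \<circ> inv p) {..<k} \<circ> p) {..<k} = x"
    and "restrict (x \<circ> p) {..<k} \<in> PiE {..<k} (\<lambda>_. UNIV)"
    and "restrict (x \<circ> inv p) {..<k} \<in> PiE {..<k} (\<lambda>_. UNIV)"
proof -
  have pi: "p j < k \<longleftrightarrow> j < k" "inv p j < k \<longleftrightarrow> j < k" for j
    using permutes_in_image[OF p] permutes_in_image[OF permutes_inv[OF p]] by auto
  show "restrict (restrict (x \<circ> p) {..<k} \<circ> inv p) {..<k} = x"
    using x pi by (auto simp: fun_eq_iff permutes_inverses[OF p] PiE_def extensional_def)
  show "restrict (restrict (x \<circ> inv p) {..<k} \<circ> p) {..<k} = x"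
    using x pi by (auto simp: fun_eq_iff permutes_inverses[OF p] PiE_def extensional_def)
qed auto

lemma sum_perm_Gam:
  assumes p: "p permutes {..<k}"
  shows "(\<Sum>j<k. \<gamma> (p j)) = (\<Sum>j<k. \<gamma> j)"
  using sum.reindex_bij_betw[OF permutes_imp_bij[OF p], of \<gamma>] .

lemma cnt_perm:
  assumes p: "p permutes {..<k}"
  shows "cnt k (restrict (t \<circ> p) {..<k}) = cnt k t"
proof (rule ext)
  fix i
  have img: "p ` {j\<in>{..<k}. t (p j) = i} = {j\<in>{..<k}. t j = i}"
  proof
    show "p ` {j\<in>{..<k}. t (p j) = i} \<subseteq> {j\<in>{..<k}. t j = i}"
      using permutes_in_image[OF p] by auto
    show "{j\<in>{..<k}. t j = i} \<subseteq> p ` {j\<in>{..<k}. t (p j) = i}"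
    proof
      fix j assume j: "j \<in> {j\<in>{..<k}. t j = i}"
      then have "inv p j \<in> {j\<in>{..<k}. t (p j) = i}"
        using permutes_in_image[OF permutes_inv[OF p]] permutes_inverses[OF p] by auto
      then show "j \<in> p ` {j\<in>{..<k}. t (p j) = i}"
        using permutes_inverses[OF p] by (metis image_eqI)
    qed
  qed
  have inj: "inj_on p {j\<in>{..<k}. t (p j) = i}"
    using permutes_inj[OF p] by (auto intro: inj_on_subset)
  have c: "card {j\<in>{..<k}. t (p j) = i} = card {j\<in>{..<k}. t j = i}"
    using card_image[OF inj] img by simp
  have "{j\<in>{..<k}. restrict (t \<circ> p) {..<k} j = i} = {j\<in>{..<k}. t (p j) = i}" by auto
  then show "cnt k (restrict (t \<circ> p) {..<k}) i = cnt k t i"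
    unfolding cnt_def using c by simp
qed

lemma Bop_sym:
  fixes gs hs :: "(('m::finite \<Rightarrow> nat) \<Rightarrow> complex^'l::finite) list" and f :: "('l \<Rightarrow> nat) \<Rightarrow> complex^'d::finite"
  assumes len: "length gs = k" and m: "mset gs = mset hs"
  shows "Bop f k gs = Bop f k hs"
proof -
  obtain p where p0: "p permutes {..<length gs}" "permute_list p gs = hs"
    using mset_eq_permutation[OF m[symmetric]] by blast
  have p: "p permutes {..<k}" using p0 len by simp
  have hs: "hs ! j = gs ! p j" if "j < k" for j
    using permute_list_nth[OF p0(1)] p0(2) len that by auto
  have pi: "p j < k \<longleftrightarrow> j < k" for j
    using permutes_in_image[OF p] by auto
  show ?thesis
  proof (rule ext)
    fix \<beta>
    have inner: "(\<Sum>\<gamma>\<in>Gam k \<beta>. \<Prod>j<k. cmp (gs ! j) (t j) (\<gamma> j))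
        = (\<Sum>\<gamma>\<in>Gam k \<beta>. \<Prod>j<k. cmp (gs ! p j) (t (p j)) (\<gamma> j))" for t :: "nat \<Rightarrow> 'l"
    proof (rule sum.reindex_bij_witness[where j = "\<lambda>\<gamma>. restrict (\<gamma> \<circ> p) {..<k}"
          and i = "\<lambda>\<gamma>. restrict (\<gamma> \<circ> inv p) {..<k}"])
      fix \<gamma> assume g: "\<gamma> \<in> Gam k \<beta>"
      then have gP: "\<gamma> \<in> PiE {..<k} (\<lambda>_. UNIV)" by (simp add: Gam_def)
      show "restrict (restrict (\<gamma> \<circ> p) {..<k} \<circ> inv p) {..<k} = \<gamma>" by (rule perm_restrict_inv(1)[OF p gP])
      show "restrict (\<gamma> \<circ> p) {..<k} \<in> Gam k \<beta>"
        using perm_restrict_inv(3)[OF p gP] g sum_perm_Gam[OF p, of \<gamma>] pi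
        by (simp add: Gam_def)
      show "restrict (restrict (\<gamma> \<circ> inv p) {..<k} \<circ> p) {..<k} = \<gamma>" by (rule perm_restrict_inv(2)[OF p gP])
      have "(\<Sum>j<k. restrict (\<gamma> \<circ> inv p) {..<k} j) = (\<Sum>j<k. \<gamma> (inv p j))" by simp
      also have "\<dots> = (\<Sum>j<k. \<gamma> j)" by (rule sum_perm_Gam[OF permutes_inv[OF p]])
      finally show "restrict (\<gamma> \<circ> inv p) {..<k} \<in> Gam k \<beta>"
        using perm_restrict_inv(4)[OF p gP] g by (simp add: Gam_def)
      show "(\<Prod>j<k. cmp (gs ! p j) (t (p j)) (restrict (\<gamma> \<circ> p) {..<k} j)) = (\<Prod>j<k. cmp (gs ! j) (t j) (\<gamma> j))"
        using prod.reindex_bij_betw[OF permutes_imp_bij[OF p], of "\<lambda>j. cmp (gs ! j) (t j) (\<gamma> j)"]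
        by simp
    qed
    show "Bop f k gs \<beta> = Bop f k hs \<beta>"
      unfolding Bop_def cprod_def
    proof (rule sum.reindex_bij_witness[where j = "\<lambda>t. restrict (t \<circ> p) {..<k}"
          and i = "\<lambda>t. restrict (t \<circ> inv p) {..<k}"])
      fix t :: "nat \<Rightarrow> 'l" assume t: "t \<in> Tset k"
      then have tP: "t \<in> PiE {..<k} (\<lambda>_. UNIV)" by (simp add: Tset_def)
      show "restrict (restrict (t \<circ> p) {..<k} \<circ> inv p) {..<k} = t" by (rule perm_restrict_inv(1)[OF p tP])
      show "restrict (t \<circ> p) {..<k} \<in> Tset k" using perm_restrict_inv(3)[OF p tP] by (simp add: Tset_def)
      show "restrict (restrict (t \<circ> inv p) {..<k} \<circ> p) {..<k} = t" by (rule perm_restrict_inv(2)[OF p tP])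
      show "restrict (t \<circ> inv p) {..<k} \<in> Tset k" using perm_restrict_inv(4)[OF p tP] by (simp add: Tset_def)
      have cfe: "cf f k (restrict (t \<circ> p) {..<k}) = cf f k t" by (simp add: cf_def cnt_perm[OF p])
      have "(\<Sum>\<gamma>\<in>Gam k \<beta>. \<Prod>j<k. cmp (hs ! j) (restrict (t \<circ> p) {..<k} j) (\<gamma> j))
          = (\<Sum>\<gamma>\<in>Gam k \<beta>. \<Prod>j<k. cmp (gs ! p j) (t (p j)) (\<gamma> j))"
        by (rule sum.cong) (auto simp: hs intro!: prod.cong)
      also have "\<dots> = (\<Sum>\<gamma>\<in>Gam k \<beta>. \<Prod>j<k. cmp (gs ! j) (t j) (\<gamma> j))" by (rule inner[symmetric])
      finally show "(\<Sum>\<gamma>\<in>Gam k \<beta>. \<Prod>j<k. cmp (hs ! j) (restrict (t \<circ> p) {..<k} j) (\<gamma> j)) *s cf f k (restrict (t \<circ> p) {..<k})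
          = (\<Sum>\<gamma>\<in>Gam k \<beta>. \<Prod>j<k. cmp (gs ! j) (t j) (\<gamma> j)) *s cf f k t"
        by (simp add: cfe)
    qed
  qed
qed


lemma nth_swap_mid:
  assumes "j \<noteq> length xs"
  shows "(xs @ w # ys) ! j = (xs @ u # ys) ! j"
  using assms by (auto simp: nth_append nth_Cons split: nat.split)

lemma prod_mid:
  assumes q: "length xs < k"
  shows "(\<Prod>j<k. cmp ((xs @ w # ys) ! j) (t j) (\<gamma> j))
       = cmp w (t (length xs)) (\<gamma> (length xs)) * (\<Prod>j\<in>{..<k} - {length xs}. cmp ((xs @ u # ys) ! j) (t j) (\<gamma> j))"
proof -
  have "(\<Prod>j<k. cmp ((xs @ w # ys) ! j) (t j) (\<gamma> j))
      = cmp ((xs @ w # ys) ! length xs) (t (length xs)) (\<gamma> (length xs)) * (\<Prod>j\<in>{..<k} - {length xs}. cmp ((xs @ w # ys) ! j) (t j) (\<gamma> j))"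
    by (rule prod.remove) (use q in auto)
  also have "(\<Prod>j\<in>{..<k} - {length xs}. cmp ((xs @ w # ys) ! j) (t j) (\<gamma> j))
      = (\<Prod>j\<in>{..<k} - {length xs}. cmp ((xs @ u # ys) ! j) (t j) (\<gamma> j))"
    by (rule prod.cong) (auto simp: nth_swap_mid[of _ xs w ys u])
  finally show ?thesis by simp
qed

lemma smultA_apply: "smultA a c \<beta> = a *s c \<beta>"
  by (simp add: smultA_def)

lemma Bop_lin:
  assumes len: "length xs + length ys + 1 = k"
  shows "Bop f k (xs @ (u + smultA a v) # ys) = Bop f k (xs @ u # ys) + smultA a (Bop f k (xs @ v # ys))"
proof -
  have q: "length xs < k" using len by simp
  have pl: "(\<Prod>j<k. cmp ((xs @ (u + smultA a v) # ys) ! j) (t j) (\<gamma> j))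
     = (\<Prod>j<k. cmp ((xs @ u # ys) ! j) (t j) (\<gamma> j)) + a * (\<Prod>j<k. cmp ((xs @ v # ys) ! j) (t j) (\<gamma> j))" for t \<gamma>
    unfolding prod_mid[OF q, of _ ys t \<gamma> u]
    by (simp add: cmp_def smultA_def algebra_simps)
  have X: "cprod k (\<lambda>j. cmp ((xs @ (u + smultA a v) # ys) ! j) (t j)) \<beta>
      = cprod k (\<lambda>j. cmp ((xs @ u # ys) ! j) (t j)) \<beta> + a * cprod k (\<lambda>j. cmp ((xs @ v # ys) ! j) (t j)) \<beta>" for t \<beta>
    unfolding cprod_def pl by (simp add: sum.distrib sum_distrib_left)
  show ?thesis
    unfolding Bop_def X
    by (rule ext) (simp add: vec_eq_iff smultA_apply sum.distrib sum_distrib_left algebra_simps)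
qed

lemma Bop_norm_unit:
  assumes d: "0 \<le> d" and len: "length gs = k" and gs: "\<forall>g\<in>set gs. inA d g \<and> Anorm d g = 1"
  shows "Anorm d (Bop f k gs) \<le> Mk f k"
proof -
  have "Anorm d (Bop f k gs) \<le> (\<Sum>t\<in>Tset k. supn (cf f k t)) * (\<Prod>j<k. Anorm d (gs ! j))"
    by (rule Bop_bound(2)) (use d gs len in auto)
  also have "(\<Prod>j<k. Anorm d (gs ! j)) = 1"
    by (rule prod.neutral) (use gs len in auto)
  finally show ?thesis by (simp add: sum_supn_cf)
qed

lemma Bop_sym_mlin:
  fixes f :: "('l::finite \<Rightarrow> nat) \<Rightarrow> complex^'d::finite"
  assumes d: "0 \<le> d"
  shows "sym_mlin d k (Bop f k :: (('m::finite \<Rightarrow> nat) \<Rightarrow> complex^'l) list \<Rightarrow> _)"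
  unfolding sym_mlin_def
proof (intro conjI allI impI)
  fix gs :: "(('m \<Rightarrow> nat) \<Rightarrow> complex^'l) list" assume "length gs = k \<and> (\<forall>g\<in>set gs. inA d g)"
  then show "inA d (Bop f k gs)" using Bop_bound(1)[OF d] by auto
next
  fix gs hs :: "(('m \<Rightarrow> nat) \<Rightarrow> complex^'l) list" assume "length gs = k \<and> (\<forall>g\<in>set gs. inA d g) \<and> mset gs = mset hs"
  then show "Bop f k gs = Bop f k hs" using Bop_sym by blast
next
  fix xs ys :: "(('m \<Rightarrow> nat) \<Rightarrow> complex^'l) list" and u v :: "('m \<Rightarrow> nat) \<Rightarrow> complex^'l" and a :: complex assume "length xs + length ys + 1 = k \<and> (\<forall>g\<in>set (xs @ ys). inA d g) \<and> inA d u \<and> inA d v"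
  then show "Bop f k (xs @ (u + smultA a v) # ys) = Bop f k (xs @ u # ys) + smultA a (Bop f k (xs @ v # ys))"
    using Bop_lin by blast
next
  show "bdd_above (mlset d k (Bop f k :: (('m \<Rightarrow> nat) \<Rightarrow> complex^'l) list \<Rightarrow> _))"
  proof (rule bdd_aboveI[where M = "Mk f k"])
    fix x assume "x \<in> mlset d k (Bop f k :: (('m \<Rightarrow> nat) \<Rightarrow> complex^'l) list \<Rightarrow> _)"
    then obtain gs :: "(('m \<Rightarrow> nat) \<Rightarrow> complex^'l) list" where "x = Anorm d (Bop f k gs)" "length gs = k" "\<forall>g\<in>set gs. inA d g \<and> Anorm d g = 1"
      unfolding mlset_def by blast
    then show "x \<le> Mk f k" using Bop_norm_unit[OF d] by simp
  qed
qed

definition unitA :: "('m::finite \<Rightarrow> nat) \<Rightarrow> complex^'l::finite" where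
  "unitA = (\<lambda>\<beta>. if \<beta> = 0 then (\<chi> i. 1) else 0)"

lemma unitA: "inA d (unitA :: ('m::finite \<Rightarrow> nat) \<Rightarrow> complex^'l::finite)" "Anorm d (unitA :: ('m \<Rightarrow> nat) \<Rightarrow> complex^'l) = 1"
proof -
  have s1: "supn ((\<chi> i. 1) :: complex^'l) = 1"
    by (rule antisym) (auto intro: supn_le order_trans[OF _ supn_ge[of _ undefined]])
  have e: "supn (unitA \<beta> :: complex^'l) * d ^ deg \<beta> = (if \<beta> = 0 then 1 else 0)" for \<beta> :: "'m \<Rightarrow> nat"
    by (simp add: unitA_def s1)
  have "((\<lambda>\<beta>. if \<beta> = (0::'m \<Rightarrow> nat) then (1::real) else 0) has_sum 1) UNIV
     \<longleftrightarrow> ((\<lambda>\<beta>. if \<beta> = (0::'m \<Rightarrow> nat) then (1::real) else 0) has_sum 1) {0}"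
    by (rule has_sum_cong_neutral) auto
  moreover have "((\<lambda>\<beta>. if \<beta> = (0::'m \<Rightarrow> nat) then (1::real) else 0) has_sum 1) {0}"
    using has_sum_finite[of "{0::'m\<Rightarrow>nat}" "\<lambda>\<beta>. if \<beta> = (0::'m \<Rightarrow> nat) then (1::real) else 0"] by simp
  ultimately have h: "((\<lambda>\<beta>. supn (unitA \<beta> :: complex^'l) * d ^ deg \<beta>) has_sum 1) (UNIV :: ('m \<Rightarrow> nat) set)"
    unfolding e by simp
  show "inA d (unitA :: ('m \<Rightarrow> nat) \<Rightarrow> complex^'l)" unfolding inA_def using h by (rule has_sum_imp_summable)
  show "Anorm d (unitA :: ('m \<Rightarrow> nat) \<Rightarrow> complex^'l) = 1" unfolding Anorm_def using h by (rule infsumI)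
qed

lemma mlnorm_Bop:
  assumes d: "0 \<le> d"
  shows "0 \<le> mlnorm d k (Bop f k :: (('m::finite \<Rightarrow> nat) \<Rightarrow> complex^'l::finite) list \<Rightarrow> _)"
    "mlnorm d k (Bop f k :: (('m::finite \<Rightarrow> nat) \<Rightarrow> complex^'l::finite) list \<Rightarrow> _) \<le> Mk f k"
proof -
  let ?B = "Bop f k :: (('m::finite \<Rightarrow> nat) \<Rightarrow> complex^'l::finite) list \<Rightarrow> _"
  have mem: "Anorm d (?B (replicate k unitA)) \<in> mlset d k ?B"
    unfolding mlset_def using unitA by fastforce
  have "sym_mlin d k ?B" by (rule Bop_sym_mlin[OF d])
  then have bdd: "bdd_above (mlset d k ?B)" by (simp add: sym_mlin_def)
  have "0 \<le> Anorm d (?B (replicate k unitA))" by (rule Anorm_nonneg[OF d])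
  also have "\<dots> \<le> mlnorm d k ?B" unfolding mlnorm_def by (rule cSup_upper[OF mem bdd])
  finally show "0 \<le> mlnorm d k ?B" .
  show "mlnorm d k ?B \<le> Mk f k" unfolding mlnorm_def
    by (rule cSup_least) (use mem in \<open>auto simp: mlset_def intro!: Bop_norm_unit[OF d]\<close>)
qed


lemma deg_group:
  fixes F :: "('l::finite \<Rightarrow> nat) \<Rightarrow> 'c::{comm_monoid_add, uniform_topological_group_add}"
  assumes "(F has_sum S) UNIV"
  shows "((\<lambda>k. \<Sum>\<alpha>\<in>Dg k. F \<alpha>) has_sum S) UNIV"
proof -
  have bij: "bij_betw (\<lambda>\<alpha>. (deg \<alpha>, \<alpha>)) UNIV (Sigma UNIV Dg)"
    by (rule bij_betwI[where g = snd]) (auto simp: Dg_def)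
  have "((\<lambda>(k,\<alpha>). F \<alpha>) has_sum S) (Sigma UNIV Dg)"
    using has_sum_reindex_bij_betw[OF bij, of "\<lambda>(k,\<alpha>). F \<alpha>"] assms by simp
  then show ?thesis
  proof (rule has_sum_Sigma')
    fix k :: nat
    show "((\<lambda>y. (\<lambda>(k,\<alpha>). F \<alpha>) (k, y)) has_sum (\<Sum>\<alpha>\<in>Dg k. F \<alpha>)) (Dg k)"
      using has_sum_finite[OF finite_Dg, of F k] by simp
  qed
qed

lemma A_sum:
  fixes f :: "('l::finite \<Rightarrow> nat) \<Rightarrow> complex^'d::finite"
  assumes "inA r f"
  shows "((\<lambda>k. Mk f k * r ^ k) has_sum Anorm r f) UNIV"
proof -
  have "((\<lambda>k. \<Sum>\<alpha>\<in>Dg k. supn (f \<alpha>) * r ^ deg \<alpha>) has_sum Anorm r f) UNIV"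
    by (rule deg_group[OF inA_summable[OF assms]])
  moreover have "(\<Sum>\<alpha>\<in>Dg k. supn (f \<alpha>) * r ^ deg \<alpha>) = Mk f k * r ^ k" for k
    by (simp add: Mk_def sum_distrib_right Dg_def)
  ultimately show ?thesis by simp
qed

lemma eval_Bop_rep:
  fixes f :: "('l::finite \<Rightarrow> nat) \<Rightarrow> complex^'d::finite" and g :: "('m::finite \<Rightarrow> nat) \<Rightarrow> complex^'l"
  assumes z: "supn z \<le> d" and g: "inA d g"
  shows "evalA (Bop f k (replicate k g)) z = (\<Sum>\<alpha>\<in>Dg k. zpow (evalA g z) \<alpha> *s f \<alpha>)"
proof -
  have d: "0 \<le> d" using supn_nonneg[of z] z by linarith
  have h1: "((\<lambda>\<beta>. zpow z \<beta> *s Bop f k (replicate k g) \<beta>) has_sum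
           (\<Sum>t\<in>Tset k. (\<Prod>j<k. evalA (replicate k g ! j) z $ t j) *s cf f k t)) UNIV"
    by (rule Bop_eval[OF z]) (use g in auto)
  have h2: "((\<lambda>\<beta>. zpow z \<beta> *s Bop f k (replicate k g) \<beta>) has_sum evalA (Bop f k (replicate k g)) z) UNIV"
    by (rule evalA_has_sum[OF Bop_bound(1)[OF d] z]) (use g in auto)
  from has_sum_unique[OF h2 h1] show ?thesis unfolding Bop_rep_value .
qed


lemma comp_main:
  fixes f :: "('l::finite \<Rightarrow> nat) \<Rightarrow> complex^'d::finite" and g :: "('m::finite \<Rightarrow> nat) \<Rightarrow> complex^'l"
  assumes \<rho>: "0 < \<rho>" and \<delta>: "0 < \<delta>" and f: "inA \<rho> f" and g: "inA \<delta> g" and gn: "Anorm \<delta> g \<le> \<rho>"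
  shows "\<exists>h. inA \<delta> h \<and> (\<forall>z. supn z \<le> \<delta> \<longrightarrow> evalA h z = evalA f (evalA g z)) \<and>
           (\<lambda>n. Anorm \<delta> (h - (\<Sum>k<n. Bop f k (replicate k g)))) \<longlonglongrightarrow> 0"
proof -
  have d0: "0 \<le> \<delta>" using \<delta> by simp
  define b where "b k = Bop f k (replicate k g)" for k
  define a where "a k = Mk f k * \<rho> ^ k" for k
  have ahs: "(a has_sum Anorm \<rho> f) UNIV" unfolding a_def by (rule A_sum[OF f])
  have a0: "0 \<le> a k" for k unfolding a_def using \<rho> by (intro mult_nonneg_nonneg Mk_nonneg) simp
  have bA: "inA \<delta> (b k)" for k unfolding b_def by (rule Bop_bound(1)[OF d0]) (use g in auto)
  have bN: "Anorm \<delta> (b k) \<le> a k" for k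
  proof -
    have "Anorm \<delta> (b k) \<le> (\<Sum>t\<in>Tset k. supn (cf f k t)) * (\<Prod>j<k. Anorm \<delta> (replicate k g ! j))"
      unfolding b_def by (rule Bop_bound(2)[OF d0]) (use g in auto)
    also have "\<dots> = Mk f k * Anorm \<delta> g ^ k" by (simp add: sum_supn_cf)
    also have "\<dots> \<le> Mk f k * \<rho> ^ k"
      by (rule mult_left_mono[OF power_mono[OF gn Anorm_nonneg[OF d0]] Mk_nonneg])
    finally show ?thesis by (simp add: a_def)
  qed
  define r where "r k \<beta> = supn (b k \<beta>) * \<delta> ^ deg \<beta>" for k \<beta>
  have r0: "0 \<le> r k \<beta>" for k \<beta> unfolding r_def by (intro mult_nonneg_nonneg supn_nonneg zero_le_power d0)
  have rk: "(r k has_sum Anorm \<delta> (b k)) UNIV" for k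
    unfolding r_def using inA_summable[OF bA] .
  have Asum: "(\<lambda>k. Anorm \<delta> (b k)) summable_on UNIV"
    by (rule summable_on_comparison_test[OF has_sum_imp_summable[OF ahs]]) (use bN Anorm_nonneg[OF d0] in auto)
  have rsum: "(\<lambda>(k,\<beta>). r k \<beta>) summable_on UNIV \<times> UNIV"
    by (rule summable_on_SigmaI[where g = "\<lambda>k. Anorm \<delta> (b k)"]) (use rk Asum r0 in auto)
  have rsw: "(\<lambda>(\<beta>,k). r k \<beta>) summable_on UNIV \<times> UNIV"
    using summable_on_swap[THEN iffD1, OF rsum] by (simp add: case_prod_unfold)
  have rbeta: "(\<lambda>k. r k \<beta>) summable_on UNIV" for \<beta>
    using summable_on_SigmaD1[of "\<lambda>\<beta> k. r k \<beta>" UNIV "\<lambda>_. UNIV" \<beta>] rsw by simp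
  have sbeta: "(\<lambda>k. supn (b k \<beta>)) summable_on UNIV" for \<beta>
  proof -
    have "(\<lambda>k. r k \<beta> * (1 / \<delta> ^ deg \<beta>)) summable_on UNIV"
      by (rule summable_on_cmult_left[OF rbeta])
    moreover have "r k \<beta> * (1 / \<delta> ^ deg \<beta>) = supn (b k \<beta>)" for k
      using \<delta> by (simp add: r_def)
    ultimately show ?thesis by simp
  qed
  have bbeta: "(\<lambda>k. b k \<beta>) summable_on A" for \<beta> A
  proof -
    have "(\<lambda>k. of_nat CARD('d) * supn (b k \<beta>)) summable_on UNIV"
      by (rule summable_on_cmult_right[OF sbeta])
    then have "(\<lambda>k. norm (b k \<beta>)) summable_on UNIV"
      by (rule summable_on_comparison_test) (auto simp: norm_le_supn)
    then have "(\<lambda>k. b k \<beta>) summable_on UNIV" by (rule abs_summable_summable)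
    then show ?thesis by (rule summable_on_subset_banach) simp
  qed
  have sbetaA: "(\<lambda>k. supn (b k \<beta>)) summable_on A" for \<beta> A
    by (rule summable_on_subset_banach[OF sbeta]) simp
  define h where "h \<beta> = (\<Sum>\<^sub>\<infinity>k. b k \<beta>)" for \<beta>
  have tail: "inA \<delta> (h - (\<Sum>k<n. b k)) \<and> Anorm \<delta> (h - (\<Sum>k<n. b k)) \<le> Anorm \<rho> f - (\<Sum>k<n. a k)" for n
  proof -
    let ?T = "{n..} :: nat set"
    have UT: "UNIV = {..<n} \<union> ?T" by auto
    have hT: "(h - (\<Sum>k<n. b k)) \<beta> = (\<Sum>\<^sub>\<infinity>k\<in>?T. b k \<beta>)" for \<beta>
    proof -
      have "h \<beta> = (\<Sum>\<^sub>\<infinity>k\<in>{..<n} \<union> ?T. b k \<beta>)" unfolding h_def UT[symmetric] ..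
      also have "\<dots> = (\<Sum>\<^sub>\<infinity>k\<in>{..<n}. b k \<beta>) + (\<Sum>\<^sub>\<infinity>k\<in>?T. b k \<beta>)"
        by (rule infsum_Un_disjoint) (auto intro: bbeta)
      finally show ?thesis by (simp add: sum_fun_apply)
    qed
    define R where "R \<beta> = (\<Sum>\<^sub>\<infinity>k\<in>?T. r k \<beta>)" for \<beta>
    have rswT: "(\<lambda>(\<beta>,k). r k \<beta>) summable_on UNIV \<times> ?T"
      by (rule summable_on_subset_banach[OF rsw]) auto
    have Rsum: "R summable_on UNIV"
      unfolding R_def using summable_on_Sigma_banach[of "\<lambda>\<beta> k. r k \<beta>" UNIV "\<lambda>_. ?T"] rswT by simp
    have le: "supn ((h - (\<Sum>k<n. b k)) \<beta>) * \<delta> ^ deg \<beta> \<le> R \<beta>" for \<beta>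
    proof -
      have "supn ((h - (\<Sum>k<n. b k)) \<beta>) \<le> (\<Sum>\<^sub>\<infinity>k\<in>?T. supn (b k \<beta>))"
      proof (rule supn_le)
        fix i
        have h1: "((\<lambda>k. b k \<beta> $ i) has_sum (\<Sum>\<^sub>\<infinity>k\<in>?T. b k \<beta>) $ i) ?T"
          using has_sum_infsum[OF bbeta[of \<beta> ?T]] unfolding has_sum_vec by blast
        show "norm ((h - (\<Sum>k<n. b k)) \<beta> $ i) \<le> (\<Sum>\<^sub>\<infinity>k\<in>?T. supn (b k \<beta>))"
          unfolding hT by (rule norm_infsum_le[OF h1 has_sum_infsum[OF sbetaA]]) (rule supn_ge)
      qed
      then have "supn ((h - (\<Sum>k<n. b k)) \<beta>) * \<delta> ^ deg \<beta> \<le> (\<Sum>\<^sub>\<infinity>k\<in>?T. supn (b k \<beta>)) * \<delta> ^ deg \<beta>"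
        by (rule mult_right_mono) (simp add: d0)
      also have "\<dots> = R \<beta>" unfolding R_def r_def by (rule infsum_cmult_left'[symmetric])
      finally show ?thesis .
    qed
    have inAT: "inA \<delta> (h - (\<Sum>k<n. b k))" unfolding inA_def
      by (rule summable_on_comparison_test[OF Rsum le]) (simp add: d0 supn_nonneg)
    have "Anorm \<delta> (h - (\<Sum>k<n. b k)) \<le> (\<Sum>\<^sub>\<infinity>\<beta>. R \<beta>)"
      unfolding Anorm_def by (rule infsum_mono[OF inAT[unfolded inA_def] Rsum le])
    also have "\<dots> = (\<Sum>\<^sub>\<infinity>k\<in>?T. \<Sum>\<^sub>\<infinity>\<beta>. r k \<beta>)"
      unfolding R_def by (rule infsum_swap_banach[OF rswT])
    also have "\<dots> = (\<Sum>\<^sub>\<infinity>k\<in>?T. Anorm \<delta> (b k))"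
      by (rule infsum_cong) (rule infsumI[OF rk])
    also have "\<dots> \<le> (\<Sum>\<^sub>\<infinity>k\<in>?T. a k)"
      by (rule infsum_mono) (auto intro: summable_on_subset_banach[OF Asum] summable_on_subset_banach[OF has_sum_imp_summable[OF ahs]] bN)
    also have "\<dots> = Anorm \<rho> f - (\<Sum>k<n. a k)"
    proof -
      have "Anorm \<rho> f = (\<Sum>\<^sub>\<infinity>k\<in>{..<n} \<union> ?T. a k)" using infsumI[OF ahs] UT by simp
      also have "\<dots> = (\<Sum>\<^sub>\<infinity>k\<in>{..<n}. a k) + (\<Sum>\<^sub>\<infinity>k\<in>?T. a k)"
        by (rule infsum_Un_disjoint) (auto intro: summable_on_subset_banach[OF has_sum_imp_summable[OF ahs]])
      finally show ?thesis by simp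
    qed
    finally show ?thesis using inAT by simp
  qed
  have hA: "inA \<delta> h" using tail[of 0] by simp
  have lim: "(\<lambda>n. Anorm \<delta> (h - (\<Sum>k<n. b k))) \<longlonglongrightarrow> 0"
  proof (rule Lim_null_comparison)
    show "\<forall>\<^sub>F n in sequentially. norm (Anorm \<delta> (h - (\<Sum>k<n. b k))) \<le> Anorm \<rho> f - (\<Sum>k<n. a k)"
    proof (intro always_eventually allI)
      fix n
      show "norm (Anorm \<delta> (h - (\<Sum>k<n. b k))) \<le> Anorm \<rho> f - (\<Sum>k<n. a k)"
        using tail[of n] Anorm_nonneg[OF d0, of "h - (\<Sum>k<n. b k)"] by simp
    qed
    have "(\<lambda>n. \<Sum>k<n. a k) \<longlonglongrightarrow> Anorm \<rho> f"
      using has_sum_imp_sums[OF ahs] by (simp add: sums_def)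
    then have "(\<lambda>n. Anorm \<rho> f - (\<Sum>k<n. a k)) \<longlonglongrightarrow> Anorm \<rho> f - Anorm \<rho> f"
      by (intro tendsto_diff tendsto_const)
    then show "(\<lambda>n. Anorm \<rho> f - (\<Sum>k<n. a k)) \<longlonglongrightarrow> 0" by simp
  qed
  have ev: "evalA h z = evalA f (evalA g z)" if z: "supn z \<le> \<delta>" for z
  proof -
    define w where "w = evalA g z"
    have w: "supn w \<le> \<rho>" unfolding w_def using supn_evalA[OF g z] gn by linarith
    show ?thesis unfolding vec_eq_iff w_def[symmetric]
    proof
      fix i
      define F where "F \<beta> k = zpow z \<beta> * b k \<beta> $ i" for \<beta> k
      have Fle: "norm (F \<beta> k) \<le> r k \<beta>" for \<beta> k
      proof -
        have "norm (F \<beta> k) = norm (zpow z \<beta>) * norm (b k \<beta> $ i)" by (simp add: F_def norm_mult)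
        also have "\<dots> \<le> \<delta> ^ deg \<beta> * supn (b k \<beta>)"
          by (rule mult_mono) (auto simp: norm_zpow[OF z] supn_ge d0)
        finally show ?thesis by (simp add: r_def mult.commute)
      qed
      have Fs: "(\<lambda>(\<beta>,k). F \<beta> k) summable_on UNIV \<times> UNIV"
      proof -
        have "(\<lambda>x. norm ((\<lambda>(\<beta>,k). F \<beta> k) x)) summable_on UNIV \<times> UNIV"
          by (rule summable_on_comparison_test[OF rsw]) (auto simp: Fle split: prod.splits)
        then show ?thesis by (rule abs_summable_summable)
      qed
      have "evalA h z $ i = (\<Sum>\<^sub>\<infinity>\<beta>. zpow z \<beta> * cmp h i \<beta>)"
        by (rule infsumI[OF evalA_comp[OF hA z], symmetric])
      also have "\<dots> = (\<Sum>\<^sub>\<infinity>\<beta>. \<Sum>\<^sub>\<infinity>k. F \<beta> k)"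
      proof (rule infsum_cong)
        fix \<beta>
        have "((\<lambda>k. b k \<beta> $ i) has_sum h \<beta> $ i) UNIV"
          using has_sum_infsum[OF bbeta[of \<beta> UNIV]] unfolding has_sum_vec h_def by blast
        then have "cmp h i \<beta> = (\<Sum>\<^sub>\<infinity>k. b k \<beta> $ i)"
          by (simp add: cmp_def infsumI)
        then show "zpow z \<beta> * cmp h i \<beta> = (\<Sum>\<^sub>\<infinity>k. F \<beta> k)"
          by (simp add: F_def infsum_cmult_right')
      qed
      also have "\<dots> = (\<Sum>\<^sub>\<infinity>k. \<Sum>\<^sub>\<infinity>\<beta>. F \<beta> k)" by (rule infsum_swap_banach[OF Fs])
      also have "\<dots> = (\<Sum>\<^sub>\<infinity>k. \<Sum>\<alpha>\<in>Dg k. zpow w \<alpha> * cmp f i \<alpha>)"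
      proof (rule infsum_cong)
        fix k
        have "(\<Sum>\<^sub>\<infinity>\<beta>. F \<beta> k) = evalA (b k) z $ i"
          unfolding F_def using infsumI[OF evalA_comp[OF bA z, of k i]] by (simp add: cmp_def)
        also have "\<dots> = (\<Sum>\<alpha>\<in>Dg k. zpow w \<alpha> * cmp f i \<alpha>)"
          unfolding b_def eval_Bop_rep[OF z g] w_def by (simp add: cmp_def)
        finally show "(\<Sum>\<^sub>\<infinity>\<beta>. F \<beta> k) = (\<Sum>\<alpha>\<in>Dg k. zpow w \<alpha> * cmp f i \<alpha>)" .
      qed
      also have "\<dots> = evalA f w $ i"
        by (rule infsumI[OF deg_group[OF evalA_comp[OF f w]]])
      finally show "evalA h z $ i = evalA f w $ i" .
    qed
  qed
  show ?thesis using hA ev lim unfolding b_def by blast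
qed


theorem mainTheorem4:
  fixes \<rho> \<delta> :: real
    and f :: "('l::finite \<Rightarrow> nat) \<Rightarrow> complex^'d::finite"
  assumes "\<rho> > 0" and "\<delta> > 0" and "inA \<rho> f"
  shows "(\<forall>g :: ('m::finite \<Rightarrow> nat) \<Rightarrow> complex^'l. inA \<delta> g \<and> Anorm \<delta> g \<le> \<rho> \<longrightarrow>
            (\<forall>z. supn z \<le> \<delta> \<longrightarrow> supn (evalA g z) \<le> \<rho>) \<and>
            (\<exists>h. inA \<delta> h \<and> (\<forall>z. supn z \<le> \<delta> \<longrightarrow> evalA h z = evalA f (evalA g z))))
       \<and> (\<exists>B :: nat \<Rightarrow> (('m \<Rightarrow> nat) \<Rightarrow> complex^'l) list \<Rightarrow> (('m \<Rightarrow> nat) \<Rightarrow> complex^'d).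
            (\<forall>k. sym_mlin \<delta> k (B k)) \<and>
            summable (\<lambda>k. mlnorm \<delta> k (B k) * \<rho> ^ k) \<and>
            (\<Sum>k. mlnorm \<delta> k (B k) * \<rho> ^ k) \<le> Anorm \<rho> f \<and>
            (\<forall>g. inA \<delta> g \<and> Anorm \<delta> g \<le> \<rho> \<longrightarrow>
               (\<exists>h. inA \<delta> h \<and> (\<forall>z. supn z \<le> \<delta> \<longrightarrow> evalA h z = evalA f (evalA g z)) \<and>
                    (\<lambda>n. Anorm \<delta> (h - (\<Sum>k<n. B k (replicate k g)))) \<longlonglongrightarrow> 0)))"
proof -
  have \<rho>: "0 < \<rho>" and \<delta>: "0 < \<delta>" and f: "inA \<rho> f" using assms by auto
  have d0: "0 \<le> \<delta>" using \<delta> by simp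
  have P1: "(\<forall>g :: ('m::finite \<Rightarrow> nat) \<Rightarrow> complex^'l. inA \<delta> g \<and> Anorm \<delta> g \<le> \<rho> \<longrightarrow>
            (\<forall>z. supn z \<le> \<delta> \<longrightarrow> supn (evalA g z) \<le> \<rho>) \<and>
            (\<exists>h. inA \<delta> h \<and> (\<forall>z. supn z \<le> \<delta> \<longrightarrow> evalA h z = evalA f (evalA g z))))"
  proof (intro allI impI conjI)
    fix g :: "('m \<Rightarrow> nat) \<Rightarrow> complex^'l" and z
    assume g: "inA \<delta> g \<and> Anorm \<delta> g \<le> \<rho>"
    {
      fix z :: "complex^'m" assume "supn z \<le> \<delta>"
      then show "supn (evalA g z) \<le> \<rho>" using supn_evalA[of \<delta> g z] g by linarith
    }
    show "\<exists>h. inA \<delta> h \<and> (\<forall>z. supn z \<le> \<delta> \<longrightarrow> evalA h z = evalA f (evalA g z))"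
      using comp_main[OF \<rho> \<delta> f, of g] g by blast
  qed
  let ?B = "(\<lambda>k. Bop f k) :: nat \<Rightarrow> (('m \<Rightarrow> nat) \<Rightarrow> complex^'l) list \<Rightarrow> (('m \<Rightarrow> nat) \<Rightarrow> complex^'d)"
  have ahs: "(\<lambda>k. Mk f k * \<rho> ^ k) sums Anorm \<rho> f" by (rule has_sum_imp_sums[OF A_sum[OF f]])
  have le: "mlnorm \<delta> k (?B k) * \<rho> ^ k \<le> Mk f k * \<rho> ^ k" for k
    by (rule mult_right_mono[OF mlnorm_Bop(2)[OF d0]]) (use \<rho> in simp)
  have ge: "0 \<le> mlnorm \<delta> k (?B k) * \<rho> ^ k" for k
    by (rule mult_nonneg_nonneg[OF mlnorm_Bop(1)[OF d0]]) (use \<rho> in simp)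
  have sm: "summable (\<lambda>k. mlnorm \<delta> k (?B k) * \<rho> ^ k)"
    by (rule summable_comparison_test'[OF sums_summable[OF ahs]]) (use le ge in simp)
  have sle: "(\<Sum>k. mlnorm \<delta> k (?B k) * \<rho> ^ k) \<le> Anorm \<rho> f"
    using suminf_le[OF le sm sums_summable[OF ahs]] sums_unique[OF ahs] by simp
  have P2: "\<exists>B :: nat \<Rightarrow> (('m \<Rightarrow> nat) \<Rightarrow> complex^'l) list \<Rightarrow> (('m \<Rightarrow> nat) \<Rightarrow> complex^'d).
            (\<forall>k. sym_mlin \<delta> k (B k)) \<and>
            summable (\<lambda>k. mlnorm \<delta> k (B k) * \<rho> ^ k) \<and>
            (\<Sum>k. mlnorm \<delta> k (B k) * \<rho> ^ k) \<le> Anorm \<rho> f \<and>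
            (\<forall>g. inA \<delta> g \<and> Anorm \<delta> g \<le> \<rho> \<longrightarrow>
               (\<exists>h. inA \<delta> h \<and> (\<forall>z. supn z \<le> \<delta> \<longrightarrow> evalA h z = evalA f (evalA g z)) \<and>
                    (\<lambda>n. Anorm \<delta> (h - (\<Sum>k<n. B k (replicate k g)))) \<longlonglongrightarrow> 0))"
  proof (intro exI[of _ ?B] conjI allI impI)
    show "sym_mlin \<delta> k (?B k)" for k by (rule Bop_sym_mlin[OF d0])
    show "summable (\<lambda>k. mlnorm \<delta> k (?B k) * \<rho> ^ k)" by (rule sm)
    show "(\<Sum>k. mlnorm \<delta> k (?B k) * \<rho> ^ k) \<le> Anorm \<rho> f" by (rule sle)
    fix g :: "('m \<Rightarrow> nat) \<Rightarrow> complex^'l"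
    assume "inA \<delta> g \<and> Anorm \<delta> g \<le> \<rho>"
    then show "\<exists>h. inA \<delta> h \<and> (\<forall>z. supn z \<le> \<delta> \<longrightarrow> evalA h z = evalA f (evalA g z)) \<and>
                    (\<lambda>n. Anorm \<delta> (h - (\<Sum>k<n. ?B k (replicate k g)))) \<longlonglongrightarrow> 0"
      using comp_main[OF \<rho> \<delta> f, of g] by blast
  qed
  show ?thesis using P1 P2 by blast
qed


end
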